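(* Let $1\le f\le\lfloor n/2\rfloor$ and $J_0=(n-2f+1,n-2f+2,\dots,n)$. (1) For every $d\in\mathcal D_f$ there exists $w\in\mathfrak S_n$ with $d_0=dw$ and $\ell(d_0)=\ell(d)+\ell(w)$. (2) For every $J\in\mathcal P_f$ there exists $w'\in\mathfrak S_n$ with $d_{J_0}=d_Jw'$ and $\ell(d_{J_0})=\ell(d_J)+\ell(w')$. (3) For every $d\in\mathcal D_{\nu_f}$ with $d\ne d_0d_{J_0}$ there exists $1\le j\le n-1$ such that $ds_j\in\mathcal D_{\nu_f}$ and $\ell(ds_j)=\ell(d)+1$.
   Context: $\mathfrak S_n$ acts on $\{1,\dots,n\}$ on the right: $(a)(\sigma\tau)=((a)\sigma)\tau$; $s_j=(j,j+1)$, $\ell$ is the Coxeter length. Let $\nu_f=((2^f),(n-2f))$ and $\mathfrak t^{\nu_f}$ the bitableau with $1,\dots,n$ entered in order along the rows of the first component (shape $(2^f)$) and then along the single row of the second component; $\mathfrak t^{\nu_f}d$ replaces each entry $a$ by $(a)d$. $\mathcal D_{\nu_f}$ is the set of $d\in\mathfrak S_n$ such that $\mathfrak t^{\nu_f}d$ is row standard and the first column of its first component increases from top to bottom; $\mathcal D_f=\mathcal D_{\nu_f}\cap\mathfrak S_{2f}$. $d_0\in\mathfrak S_{2f}$ is defined by $(a)d_0=(a+1)/2$ for odd $a\in\{1,\dots,2f-1\}$ and $(a)d_0=2f+1-a/2$ for even $a\in\{2,\dots,2f\}$. $\mathcal P_f=\{(i_1,\dots,i_{2f}):1\le i_1<\dots<i_{2f}\le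 n\}$, and for $J\in\mathcal P_f$, $d_J$ is the unique element of $\mathcal D_{\nu_f}$ such that the first component of $\mathfrak t^{\nu_f}d_J$ is the tableau obtained by inserting the entries of $J$ in increasing order along successive rows of the shape $(2^f)$. *)

theory Defs
  imports "HOL-Combinatorics.Combinatorics"
begin

text \<open>Permutations of {1..n} as functions nat => nat fixing everything outside {1..n}.
  Right action: (a)sigma = sigma a, and the product sigma tau acts as "first sigma, then tau".\<close>

definition Sym :: "nat \<Rightarrow> (nat \<Rightarrow> nat) set" where
  "Sym n = {\<sigma>. \<sigma> permutes {1..n}}"

definition pmult :: "(nat \<Rightarrow> nat) \<Rightarrow> (nat \<Rightarrow> nat) \<Rightarrow> (nat \<Rightarrow> nat)" where
  "pmult \<sigma> \<tau> = \<tau> \<circ> \<sigma>"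

definition sj :: "nat \<Rightarrow> nat \<Rightarrow> nat" where
  "sj j = Transposition.transpose j (Suc j)"

definition word_prod :: "nat list \<Rightarrow> nat \<Rightarrow> nat" where
  "word_prod js = foldr (\<lambda>j acc. pmult (sj j) acc) js id"

definition clen :: "nat \<Rightarrow> (nat \<Rightarrow> nat) \<Rightarrow> nat" where
  "clen n \<sigma> = (LEAST k. \<exists>js. length js = k \<and> (\<forall>j\<in>set js. 1 \<le> j \<and> j < n) \<and> \<sigma> = word_prod js)"

text \<open>D_{nu_f}: t^{nu_f} d row standard, first column of first component increasing.
  Rows of the first component: (2r-1, 2r), r = 1..f; second component: 2f+1, ..., n.\<close>
definition Dnu :: "nat \<Rightarrow> nat \<Rightarrow> (nat \<Rightarrow> nat) set" where
  "Dnu n f = {d \<in> Sym n.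
      (\<forall>r\<in>{1..f}. d (2*r - 1) < d (2*r)) \<and>
      (\<forall>r. 1 \<le> r \<and> r < f \<longrightarrow> d (2*r - 1) < d (2*r + 1)) \<and>
      (\<forall>a. 2*f + 1 \<le> a \<and> a < n \<longrightarrow> d a < d (Suc a))}"

definition Df :: "nat \<Rightarrow> nat \<Rightarrow> (nat \<Rightarrow> nat) set" where
  "Df n f = Dnu n f \<inter> Sym (2*f)"

definition d0 :: "nat \<Rightarrow> nat \<Rightarrow> nat" where
  "d0 f a = (if 1 \<le> a \<and> a \<le> 2*f then
               (if odd a then (a + 1) div 2 else 2*f + 1 - a div 2)
             else a)"

definition Pf :: "nat \<Rightarrow> nat \<Rightarrow> nat list set" where
  "Pf n f = {J. length J = 2*f \<and> sorted_wrt (<) J \<and> set J \<subseteq> {1..n}}"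

text \<open>d_J: the unique d in D_{nu_f} whose first component tableau has the entries of J
  in increasing order along successive rows, i.e. (a)d = J_a for a = 1..2f.\<close>
definition dJ :: "nat \<Rightarrow> nat \<Rightarrow> nat list \<Rightarrow> nat \<Rightarrow> nat" where
  "dJ n f J = (THE d. d \<in> Dnu n f \<and> (\<forall>a\<in>{1..2*f}. d a = J ! (a - 1)))"

definition J0 :: "nat \<Rightarrow> nat \<Rightarrow> nat list" where
  "J0 n f = [n - 2*f + 1 ..< n + 1]"

end

theory Submission
  imports Defs
begin


definition Inv :: "nat \<Rightarrow> (nat \<Rightarrow> nat) \<Rightarrow> (nat \<times> nat) set" where
  "Inv n \<sigma> = {(a,b). 1 \<le> a \<and> a < b \<and> b \<le> n \<and> \<sigma> b < \<sigma> a}"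

lemma Inv_sub: "Inv n \<sigma> \<subseteq> {1..n} \<times> {1..n}"
  unfolding Inv_def by auto

lemma finite_Inv[simp]: "finite (Inv n \<sigma>)"
  using Inv_sub finite_subset by blast

lemma sj_apply: "sj j x = (if x = j then Suc j else if x = Suc j then j else x)"
  unfolding sj_def transpose_def by auto

lemma Inv_rmul_core:
  assumes "1 \<le> j" "j < n"
  shows "Inv n (\<sigma> \<circ> sj j) - {(j, Suc j)} = map_prod (sj j) (sj j) ` (Inv n \<sigma> - {(j, Suc j)})"
proof -
  have key: "\<And>x y. 1 \<le> x \<Longrightarrow> x < y \<Longrightarrow> y \<le> n \<Longrightarrow> (x,y) \<noteq> (j, Suc j) \<Longrightarrow>
      1 \<le> sj j x \<and> sj j x < sj j y \<and> sj j y \<le> n \<and> (sj j x, sj j y) \<noteq> (j, Suc j)"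
    using assms by (auto simp: sj_apply)
  have inv: "\<And>x. sj j (sj j x) = x" by (auto simp: sj_apply)
  show ?thesis
  proof (rule set_eqI, rule iffI)
    fix z assume hz: "z \<in> Inv n (\<sigma> \<circ> sj j) - {(j, Suc j)}"
    obtain x y where z: "z = (x,y)" by (cases z)
    from hz z have "1 \<le> x" "x < y" "y \<le> n" "\<sigma> (sj j y) < \<sigma> (sj j x)" "(x,y) \<noteq> (j, Suc j)"
      by (auto simp: Inv_def)
    then have m: "(sj j x, sj j y) \<in> Inv n \<sigma> - {(j, Suc j)}"
      using key[of x y] unfolding Inv_def by simp
    have e: "z = map_prod (sj j) (sj j) (sj j x, sj j y)" by (simp add: inv z)
    show "z \<in> map_prod (sj j) (sj j) ` (Inv n \<sigma> - {(j, Suc j)})"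
      using e m by blast
  next
    fix z assume hz: "z \<in> map_prod (sj j) (sj j) ` (Inv n \<sigma> - {(j, Suc j)})"
    then obtain x y where z: "z = map_prod (sj j) (sj j) (x,y)" and hxy: "(x,y) \<in> Inv n \<sigma> - {(j, Suc j)}"
      by auto
    then have "1 \<le> x" "x < y" "y \<le> n" "\<sigma> y < \<sigma> x" "(x,y) \<noteq> (j, Suc j)" by (auto simp: Inv_def)
    then show "z \<in> Inv n (\<sigma> \<circ> sj j) - {(j, Suc j)}"
      using key[of x y] unfolding Inv_def z by (simp add: inv)
  qed
qed

lemma Inv_rmul_card:
  assumes "1 \<le> j" "j < n"
  shows "card (Inv n (\<sigma> \<circ> sj j) - {(j, Suc j)}) = card (Inv n \<sigma> - {(j, Suc j)})"
proof -
  have "inj (map_prod (sj j) (sj j))"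
    by (rule prod.inj_map) (simp_all add: sj_def inj_transpose)
  then show ?thesis unfolding Inv_rmul_core[OF assms]
    by (simp add: card_image inj_on_subset)
qed

lemma Inv_p_mem:
  assumes "1 \<le> j" "j < n"
  shows "(j, Suc j) \<in> Inv n \<sigma> \<longleftrightarrow> \<sigma> (Suc j) < \<sigma> j"
    "(j, Suc j) \<in> Inv n (\<sigma> \<circ> sj j) \<longleftrightarrow> \<sigma> j < \<sigma> (Suc j)"
  using assms by (auto simp: Inv_def sj_apply)

lemma rmul_up:
  assumes "1 \<le> j" "j < n" "\<sigma> j < \<sigma> (Suc j)"
  shows "card (Inv n (\<sigma> \<circ> sj j)) = card (Inv n \<sigma>) + 1"
proof -
  have a: "(j, Suc j) \<in> Inv n (\<sigma> \<circ> sj j)" "(j, Suc j) \<notin> Inv n \<sigma>" using Inv_p_mem[OF assms(1,2)] assms(3) by auto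
  have "card (Inv n (\<sigma> \<circ> sj j)) = card (Inv n (\<sigma> \<circ> sj j) - {(j, Suc j)}) + 1"
    using a card_Diff1_less[OF finite_Inv a(1)] by (simp add: card_Diff_singleton)
  also have "\<dots> = card (Inv n \<sigma>) + 1" using Inv_rmul_card[OF assms(1,2)] a by simp
  finally show ?thesis .
qed

lemma rmul_down:
  assumes "1 \<le> j" "j < n" "\<sigma> (Suc j) < \<sigma> j"
  shows "card (Inv n (\<sigma> \<circ> sj j)) + 1 = card (Inv n \<sigma>)"
proof -
  have a: "(j, Suc j) \<notin> Inv n (\<sigma> \<circ> sj j)" "(j, Suc j) \<in> Inv n \<sigma>" using Inv_p_mem[OF assms(1,2)] assms(3) by auto
  have "card (Inv n \<sigma>) = card (Inv n \<sigma> - {(j, Suc j)}) + 1"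
    using a card_Diff1_less[OF finite_Inv a(2)] by (simp add: card_Diff_singleton)
  also have "\<dots> = card (Inv n (\<sigma> \<circ> sj j)) + 1"
  proof -
    have "Inv n (\<sigma> \<circ> sj j) - {(j, Suc j)} = Inv n (\<sigma> \<circ> sj j)" using a by auto
    then show ?thesis using Inv_rmul_card[OF assms(1,2), of \<sigma>] by simp
  qed
  finally show ?thesis by simp
qed

lemma rmul_le:
  assumes "1 \<le> j" "j < n"
  shows "card (Inv n (\<sigma> \<circ> sj j)) \<le> card (Inv n \<sigma>) + 1"
proof (cases "\<sigma> j < \<sigma> (Suc j)")
  case True then show ?thesis using rmul_up[OF assms True] by simp
next
  case False
  show ?thesis
  proof (cases "\<sigma> (Suc j) < \<sigma> j")
    case True then show ?thesis using rmul_down[OF assms True] by simp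
  next
    case F2: False
    then have "(j, Suc j) \<notin> Inv n (\<sigma> \<circ> sj j)" "(j, Suc j) \<notin> Inv n \<sigma>" using Inv_p_mem[OF assms] False by auto
    then show ?thesis using Inv_rmul_card[OF assms, of \<sigma>] by simp
  qed
qed

lemma word_prod_Nil[simp]: "word_prod [] = id" by (simp add: word_prod_def)
lemma word_prod_Cons[simp]: "word_prod (j#js) = word_prod js \<circ> sj j"
  by (simp add: word_prod_def pmult_def)
lemma word_prod_append: "word_prod (xs@ys) = word_prod ys \<circ> word_prod xs"
  by (induction xs) auto

lemma sj_permutes: "1 \<le> j \<Longrightarrow> j < n \<Longrightarrow> sj j permutes {1..n}"
  unfolding sj_def by (rule permutes_swap_id) auto

lemma sj_sj[simp]: "\<sigma> \<circ> sj j \<circ> sj j = \<sigma>"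
  by (simp add: sj_def comp_assoc)

lemma word_prod_permutes: "\<forall>j\<in>set js. 1 \<le> j \<and> j < n \<Longrightarrow> word_prod js permutes {1..n}"
proof (induction js)
  case (Cons a js)
  then have "word_prod js permutes {1..n}" "1 \<le> a" "a < n" by auto
  then show ?case unfolding word_prod_Cons by (intro permutes_compose sj_permutes)
qed simp

lemma word_len_ge: "\<forall>j\<in>set js. 1 \<le> j \<and> j < n \<Longrightarrow> card (Inv n (word_prod js)) \<le> length js"
proof (induction js)
  case Nil
  have "Inv n (word_prod []) = {}" by (auto simp: Inv_def)
  then have "card (Inv n (word_prod [])) = 0" by (simp only: card.empty)
  then show ?case by (simp only: list.size(3) le_zero_eq)
next
  case (Cons j js)
  then have "card (Inv n (word_prod js \<circ> sj j)) \<le> card (Inv n (word_prod js)) + 1"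
    by (intro rmul_le) auto
  moreover have "card (Inv n (word_prod js)) \<le> length js" using Cons by simp
  ultimately show ?case unfolding word_prod_Cons list.size(4) by linarith
qed

lemma no_descent_id:
  assumes p: "\<sigma> permutes {1..n}" and h: "\<forall>j. 1 \<le> j \<and> j < n \<longrightarrow> \<sigma> j < \<sigma> (Suc j)"
  shows "\<sigma> = id"
proof -
  have img: "\<And>a. a \<in> {1..n} \<Longrightarrow> \<sigma> a \<in> {1..n}" using p by (metis permutes_in_image)
  have ge: "\<And>a. 1 \<le> a \<Longrightarrow> a \<le> n \<Longrightarrow> a \<le> \<sigma> a"
  proof -
    fix a show "1 \<le> a \<Longrightarrow> a \<le> n \<Longrightarrow> a \<le> \<sigma> a"
    proof (induction a)
      case 0 then show ?case by simp
    next
      case (Suc a)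
      show ?case
      proof (cases "a = 0")
        case True then show ?thesis using img[of 1] Suc by auto
      next
        case False
        then have "a \<le> \<sigma> a" using Suc by auto
        moreover have "\<sigma> a < \<sigma> (Suc a)" using h Suc False by auto
        ultimately show ?thesis by simp
      qed
    qed
  qed
  have le: "\<And>k a. a + k = n \<Longrightarrow> 1 \<le> a \<Longrightarrow> \<sigma> a \<le> a"
  proof -
    fix k show "\<And>a. a + k = n \<Longrightarrow> 1 \<le> a \<Longrightarrow> \<sigma> a \<le> a"
    proof (induction k)
      case 0 then show ?case using img[of a] by auto
    next
      case (Suc k)
      then have "\<sigma> (Suc a) \<le> Suc a" by auto
      moreover have "\<sigma> a < \<sigma> (Suc a)" using h Suc by auto
      ultimately show ?case by simp
    qed
  qed
  show ?thesis
  proof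
    fix a show "\<sigma> a = id a"
    proof (cases "a \<in> {1..n}")
      case True
      then obtain k where "a + k = n" by (metis atLeastAtMost_iff le_add_diff_inverse)
      then show ?thesis using ge[of a] le[of a k] True by simp
    next
      case False then show ?thesis using p permutes_not_in by fastforce
    qed
  qed
qed

lemma descent_exists:
  assumes p: "\<sigma> permutes {1..n}" and ne: "\<sigma> \<noteq> id"
  shows "\<exists>j. 1 \<le> j \<and> j < n \<and> \<sigma> (Suc j) < \<sigma> j"
proof (rule ccontr)
  assume "\<not> ?thesis"
  moreover have "inj \<sigma>" using p permutes_inj by blast
  ultimately have "\<forall>j. 1 \<le> j \<and> j < n \<longrightarrow> \<sigma> j < \<sigma> (Suc j)"
  proof (intro allI impI)
    fix j assume "\<not> (\<exists>j. 1 \<le> j \<and> j < n \<and> \<sigma> (Suc j) < \<sigma> j)" "inj \<sigma>" "1 \<le> j \<and> j < n"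
    moreover have "\<sigma> j \<noteq> \<sigma> (Suc j)" using \<open>inj \<sigma>\<close> by (metis injD n_not_Suc_n)
    ultimately show "\<sigma> j < \<sigma> (Suc j)" by (meson linorder_neqE_nat)
  qed
  then show False using no_descent_id[OF p] ne by blast
qed

lemma Inv_empty_id: "\<sigma> permutes {1..n} \<Longrightarrow> Inv n \<sigma> = {} \<Longrightarrow> \<sigma> = id"
proof (rule ccontr)
  assume a: "\<sigma> permutes {1..n}" "Inv n \<sigma> = {}" "\<sigma> \<noteq> id"
  then obtain j where "1 \<le> j" "j < n" "\<sigma> (Suc j) < \<sigma> j" using descent_exists by blast
  then have "(j, Suc j) \<in> Inv n \<sigma>" by (simp add: Inv_p_mem)
  then show False using a by simp
qed

lemma word_exists:
  "\<sigma> permutes {1..n} \<Longrightarrow> \<exists>js. (\<forall>j\<in>set js. 1 \<le> j \<and> j < n) \<and> length js = card (Inv n \<sigma>) \<and> \<sigma> = word_prod js"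
proof (induction "card (Inv n \<sigma>)" arbitrary: \<sigma> rule: less_induct)
  case less
  show ?case
  proof (cases "\<sigma> = id")
    case True
    then have "Inv n \<sigma> = {}" by (auto simp: Inv_def)
    then show ?thesis using True by (intro exI[of _ "[]"]) simp
  next
    case False
    then obtain j where j: "1 \<le> j" "j < n" "\<sigma> (Suc j) < \<sigma> j" using descent_exists less.prems by blast
    have c: "card (Inv n (\<sigma> \<circ> sj j)) + 1 = card (Inv n \<sigma>)" using rmul_down[OF j] .
    have pp: "\<sigma> \<circ> sj j permutes {1..n}" using less.prems sj_permutes[OF j(1,2)] by (rule permutes_compose[rotated])
    obtain js where js: "\<forall>j\<in>set js. 1 \<le> j \<and> j < n" "length js = card (Inv n (\<sigma> \<circ> sj j))" "\<sigma> \<circ> sj j = word_prod js"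
      using less.hyps[OF _ pp] c by fastforce
    show ?thesis
    proof (rule exI[of _ "j # js"], intro conjI)
      show "\<forall>i\<in>set (j # js). 1 \<le> i \<and> i < n" using js(1) j by simp
      show "length (j # js) = card (Inv n \<sigma>)" using js(2) c by simp
      have "word_prod (j # js) = \<sigma> \<circ> sj j \<circ> sj j" using js(3) by simp
      then show "\<sigma> = word_prod (j # js)" by simp
    qed
  qed
qed

lemma clen_eq: assumes "\<sigma> permutes {1..n}" shows "clen n \<sigma> = card (Inv n \<sigma>)"
proof -
  obtain js where js: "\<forall>j\<in>set js. 1 \<le> j \<and> j < n" "length js = card (Inv n \<sigma>)" "\<sigma> = word_prod js"
    using word_exists[OF assms] by blast
  show ?thesis unfolding clen_def
  proof (rule Least_equality)
    show "\<exists>js. length js = card (Inv n \<sigma>) \<and> (\<forall>j\<in>set js. 1 \<le> j \<and> j < n) \<and> \<sigma> = word_prod js"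
      using js by blast
  next
    fix k assume "\<exists>js. length js = k \<and> (\<forall>j\<in>set js. 1 \<le> j \<and> j < n) \<and> \<sigma> = word_prod js"
    then show "card (Inv n \<sigma>) \<le> k" using word_len_ge by blast
  qed
qed

lemma subadd:
  assumes "u permutes {1..n}" "w permutes {1..n}"
  shows "card (Inv n (w \<circ> u)) \<le> card (Inv n u) + card (Inv n w)"
proof -
  obtain xs where xs: "\<forall>j\<in>set xs. 1 \<le> j \<and> j < n" "length xs = card (Inv n u)" "u = word_prod xs"
    using word_exists[OF assms(1)] by blast
  obtain ys where ys: "\<forall>j\<in>set ys. 1 \<le> j \<and> j < n" "length ys = card (Inv n w)" "w = word_prod ys"
    using word_exists[OF assms(2)] by blast
  have "w \<circ> u = word_prod (xs @ ys)" using xs ys by (simp add: word_prod_append)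
  then show ?thesis using word_len_ge[of "xs@ys" n] xs ys by auto
qed

lemma perm_facts:
  assumes "u permutes {1..n}"
  shows "inj u" "\<And>x. x \<in> {1..n} \<Longrightarrow> u x \<in> {1..n}"
    "\<And>y. y \<in> {1..n} \<Longrightarrow> \<exists>x\<in>{1..n}. u x = y"
proof -
  show "inj u" using assms permutes_inj by blast
  show "\<And>x. x \<in> {1..n} \<Longrightarrow> u x \<in> {1..n}" using assms by (metis permutes_in_image)
  fix y assume "y \<in> {1..n}"
  then show "\<exists>x\<in>{1..n}. u x = y" using assms
    by (metis permutes_inverses(1) permutes_in_image permutes_inv)
qed

lemma lmul_Inv:
  assumes p: "u permutes {1..n}" and ab: "1 \<le> a" "a < b" "b \<le> n" and uab: "u a = j" "u b = Suc j"
  shows "Inv n (sj j \<circ> u) = insert (a,b) (Inv n u)" "(a,b) \<notin> Inv n u"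
proof -
  have inj: "inj u" using perm_facts[OF p] by blast
  have ea: "\<And>x. u x = j \<longleftrightarrow> x = a" using inj uab by (metis injD)
  have eb: "\<And>x. u x = Suc j \<longleftrightarrow> x = b" using inj uab by (metis injD)
  show "(a,b) \<notin> Inv n u" using uab by (auto simp: Inv_def)
  show "Inv n (sj j \<circ> u) = insert (a,b) (Inv n u)"
  proof (rule set_eqI)
    fix z :: "nat \<times> nat" obtain x y where z: "z = (x,y)" by (cases z)
    show "z \<in> Inv n (sj j \<circ> u) \<longleftrightarrow> z \<in> insert (a,b) (Inv n u)"
    proof -
      have na: "x \<noteq> a \<Longrightarrow> u x \<noteq> j" "y \<noteq> a \<Longrightarrow> u y \<noteq> j" using ea by auto
      have nb: "x \<noteq> b \<Longrightarrow> u x \<noteq> Suc j" "y \<noteq> b \<Longrightarrow> u y \<noteq> Suc j" using eb by auto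
      show ?thesis
        unfolding z Inv_def using ab uab na nb
        by (auto simp: sj_apply split: if_splits) (metis less_asym)
    qed
  qed
qed

lemma step_lemma:
  assumes pu: "u permutes {1..n}" and pv: "v permutes {1..n}" and sub: "Inv n u \<subseteq> Inv n v" and ne: "Inv n u \<noteq> Inv n v"
  shows "\<exists>a b. (a,b) \<in> Inv n v \<and> (a,b) \<notin> Inv n u \<and> u b = Suc (u a)"
proof -
  have inj: "inj u" using perm_facts[OF pu] by blast
  define P where "P k \<longleftrightarrow> (\<exists>a b. (a,b) \<in> Inv n v \<and> (a,b) \<notin> Inv n u \<and> u b = u a + k)" for k
  have lt: "\<And>a b. (a,b) \<in> Inv n v \<Longrightarrow> (a,b) \<notin> Inv n u \<Longrightarrow> u a < u b"
  proof -
    fix a b assume "(a,b) \<in> Inv n v" "(a,b) \<notin> Inv n u"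
    then have "a < b" "\<not> u b < u a" by (auto simp: Inv_def)
    moreover have "u a \<noteq> u b" using inj \<open>a < b\<close> by (metis injD less_irrefl)
    ultimately show "u a < u b" by simp
  qed
  obtain a0 b0 where h0: "(a0,b0) \<in> Inv n v" "(a0,b0) \<notin> Inv n u" using sub ne by auto
  have "P (u b0 - u a0)" unfolding P_def using h0 lt[OF h0] by (intro exI[of _ a0] exI[of _ b0]) auto
  define k where "k = (LEAST k. P k)"
  have Pk: "P k" unfolding k_def by (rule LeastI) fact
  have kmin: "\<And>k'. P k' \<Longrightarrow> k \<le> k'" unfolding k_def by (rule Least_le)
  obtain a b where hab: "(a,b) \<in> Inv n v" "(a,b) \<notin> Inv n u" "u b = u a + k" using Pk P_def by blast
  have ab: "1 \<le> a" "a < b" "b \<le> n" "v b < v a" using hab(1) by (auto simp: Inv_def)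
  have "u a < u b" using lt[OF hab(1,2)] .
  then have k1: "k \<ge> 1" using hab(3) by simp
  show ?thesis
  proof (cases "k = 1")
    case True then show ?thesis using hab by auto
  next
    case False
    have ubn: "u b \<in> {1..n}" using perm_facts(2)[OF pu] ab by auto
    then obtain c where c: "c \<in> {1..n}" "u c = Suc (u a)" using perm_facts(3)[OF pu, of "Suc (u a)"] hab(3) k1 by force
    have c1: "u a < u c" "u c < u b" using c hab(3) False k1 by auto
    have "P (u b - u c) \<or> P (u c - u a)"
    proof -
      consider "c < a" | "a < c \<and> c < b" | "b < c" using c1 by (metis less_irrefl linorder_neqE_nat)
      then show ?thesis
      proof cases
        case 1
        then have "(c,a) \<in> Inv n u" using c c1 ab by (auto simp: Inv_def)
        then have "v a < v c" using sub by (auto simp: Inv_def)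
        then have "(c,b) \<in> Inv n v" "(c,b) \<notin> Inv n u" using c c1 ab 1 by (auto simp: Inv_def)
        then show ?thesis unfolding P_def using c1 by (intro disjI1 exI[of _ c] exI[of _ b]) auto
      next
        case 3
        then have "(b,c) \<in> Inv n u" using c c1 ab by (auto simp: Inv_def)
        then have "v c < v b" using sub by (auto simp: Inv_def)
        then have "(a,c) \<in> Inv n v" "(a,c) \<notin> Inv n u" using c c1 ab 3 by (auto simp: Inv_def)
        then show ?thesis unfolding P_def using c1 by (intro disjI2 exI[of _ a] exI[of _ c]) auto
      next
        case 2
        show ?thesis
        proof (cases "v c < v a")
          case True
          then have "(a,c) \<in> Inv n v" "(a,c) \<notin> Inv n u" using c c1 ab 2 by (auto simp: Inv_def)
          then show ?thesis unfolding P_def using c1 by (intro disjI2 exI[of _ a] exI[of _ c]) auto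
        next
          case False
          then have "(c,b) \<in> Inv n v" "(c,b) \<notin> Inv n u" using c c1 ab 2 by (auto simp: Inv_def)
          then show ?thesis unfolding P_def using c1 by (intro disjI1 exI[of _ c] exI[of _ b]) auto
        qed
      qed
    qed
    moreover have "u b - u c < k" "u c - u a < k" using c1 hab(3) by auto
    ultimately have False using kmin by (meson leD)
    then show ?thesis ..
  qed
qed

lemma Inv_eq_imp_eq:
  assumes pu: "u permutes {1..n}" and pv: "v permutes {1..n}" and e: "Inv n u = Inv n v"
  shows "u = v"
proof -
  define w where "w = v \<circ> inv u"
  have pw: "w permutes {1..n}" unfolding w_def using pv permutes_inv[OF pu] by (rule permutes_compose[rotated])
  have "Inv n w = {}"
  proof (rule ccontr)
    assume "Inv n w \<noteq> {}"
    then obtain i j where ij: "(i,j) \<in> Inv n w" by auto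
    then have ij': "1 \<le> i" "i < j" "j \<le> n" "v (inv u j) < v (inv u i)" by (auto simp: Inv_def w_def)
    define a where "a = inv u i"
    define b where "b = inv u j"
    have uab: "u a = i" "u b = j" unfolding a_def b_def using permutes_inverses(1)[OF pu] by auto
    have ain: "a \<in> {1..n}" "b \<in> {1..n}" unfolding a_def b_def using ij' permutes_inv[OF pu]
      by (metis atLeastAtMost_iff le_trans less_imp_le_nat permutes_in_image)+
    have vab: "v b < v a" using ij' unfolding a_def b_def by simp
    consider "a < b" | "b < a" | "a = b" by arith
    then show False
    proof cases
      case 1
      then have "(a,b) \<in> Inv n v" using ain vab by (auto simp: Inv_def)
      moreover have "(a,b) \<notin> Inv n u" using uab ij' by (auto simp: Inv_def)
      ultimately show False using e by simp
    next
      case 2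
      then have "(b,a) \<in> Inv n u" using ain uab ij' by (auto simp: Inv_def)
      then have "(b,a) \<in> Inv n v" using e by simp
      then show False using vab by (auto simp: Inv_def)
    next
      case 3 then show False using uab ij' by simp
    qed
  qed
  then have "w = id" using Inv_empty_id pw by blast
  then have "v \<circ> inv u \<circ> u = u" unfolding w_def by simp
  then show ?thesis using permutes_inv_o(2)[OF pu] by (simp add: comp_assoc)
qed

lemma weak_order_G:
  assumes "u permutes {1..n}" "v permutes {1..n}" "Inv n u \<subseteq> Inv n v"
  shows "\<exists>w. w permutes {1..n} \<and> v = w \<circ> u \<and> card (Inv n v) = card (Inv n u) + card (Inv n w)"
  using assms
proof (induction "card (Inv n v - Inv n u)" arbitrary: u rule: less_induct)
  case less
  show ?case
  proof (cases "Inv n u = Inv n v")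
    case True
    then have "u = v" using Inv_eq_imp_eq less.prems by blast
    moreover have "card (Inv n id) = 0"
    proof -
      have "Inv n id = {}" by (auto simp: Inv_def)
      then show ?thesis by (simp only: card.empty)
    qed
    ultimately show ?thesis by (intro exI[of _ id]) simp
  next
    case False
    obtain a b where ab: "(a,b) \<in> Inv n v" "(a,b) \<notin> Inv n u" "u b = Suc (u a)"
      using step_lemma[OF less.prems False] by blast
    have abr: "1 \<le> a" "a < b" "b \<le> n" using ab(1) by (auto simp: Inv_def)
    define j where "j = u a"
    have jr: "1 \<le> j" "j < n"
    proof -
      have "u a \<in> {1..n}" "u b \<in> {1..n}" using perm_facts(2)[OF less.prems(1)] abr by auto
      then show "1 \<le> j" "j < n" using ab(3) unfolding j_def by auto
    qed
    have li: "Inv n (sj j \<circ> u) = insert (a,b) (Inv n u)"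
      using lmul_Inv(1)[OF less.prems(1) abr] ab(3) unfolding j_def by simp
    have pu': "sj j \<circ> u permutes {1..n}" using less.prems(1) sj_permutes[OF jr] by (rule permutes_compose)
    have sub': "Inv n (sj j \<circ> u) \<subseteq> Inv n v" using li less.prems(3) ab(1) by auto
    have cu': "card (Inv n (sj j \<circ> u)) = card (Inv n u) + 1" using li ab(2) by simp
    have eqd: "Inv n v - Inv n (sj j \<circ> u) = (Inv n v - Inv n u) - {(a,b)}" using li by auto
    have "card ((Inv n v - Inv n u) - {(a,b)}) < card (Inv n v - Inv n u)"
      by (rule card_Diff1_less) (use ab in auto)
    then have "card (Inv n v - Inv n (sj j \<circ> u)) < card (Inv n v - Inv n u)"
      by (simp only: eqd)
    then obtain w' where w': "w' permutes {1..n}" "v = w' \<circ> (sj j \<circ> u)"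
      "card (Inv n v) = card (Inv n (sj j \<circ> u)) + card (Inv n w')"
      using less.hyps[OF _ pu' less.prems(2) sub'] by blast
    define w where "w = w' \<circ> sj j"
    have pw: "w permutes {1..n}" unfolding w_def using sj_permutes[OF jr] w'(1) by (rule permutes_compose)
    have vw: "v = w \<circ> u" using w'(2) unfolding w_def by (simp add: comp_assoc)
    have "card (Inv n w) \<le> card (Inv n w') + 1" unfolding w_def by (rule rmul_le[OF jr])
    moreover have "card (Inv n v) \<le> card (Inv n u) + card (Inv n w)" using subadd[OF less.prems(1) pw] vw by simp
    ultimately have "card (Inv n v) = card (Inv n u) + card (Inv n w)" using w'(3) cu' by linarith
    then show ?thesis using pw vw by blast
  qed
qed




lemma Dnu_alt: "d \<in> Dnu n f \<longleftrightarrow> d permutes {1..n} \<and>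
   (\<forall>a. odd a \<and> a < 2*f \<longrightarrow> d a < d (Suc a)) \<and>
   (\<forall>a. odd a \<and> a + 2 < 2*f \<longrightarrow> d a < d (a+2)) \<and>
   (\<forall>a. 2*f + 1 \<le> a \<and> a < n \<longrightarrow> d a < d (Suc a))"
proof -
  have e1: "(\<forall>r\<in>{1..f}. d (2*r - 1) < d (2*r)) \<longleftrightarrow> (\<forall>a. odd a \<and> a < 2*f \<longrightarrow> d a < d (Suc a))"
  proof
    assume h: "\<forall>r\<in>{1..f}. d (2*r - 1) < d (2*r)"
    show "\<forall>a. odd a \<and> a < 2*f \<longrightarrow> d a < d (Suc a)"
    proof (intro allI impI)
      fix a assume a: "odd a \<and> a < 2*f"
      then obtain r where r: "a = 2*r + 1" by (metis oddE)
      then have "Suc r \<in> {1..f}" using a by auto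
      moreover have "2 * Suc r - 1 = a" "2 * Suc r = Suc a" using r by auto
      ultimately show "d a < d (Suc a)" using h by (metis)
    qed
  next
    assume h: "\<forall>a. odd a \<and> a < 2*f \<longrightarrow> d a < d (Suc a)"
    show "\<forall>r\<in>{1..f}. d (2*r - 1) < d (2*r)"
    proof
      fix r assume r: "r \<in> {1..f}"
      then have "odd (2*r-1) \<and> 2*r - 1 < 2*f" by auto
      then have "d (2*r-1) < d (Suc (2*r-1))" using h by blast
      moreover have "Suc (2*r-1) = 2*r" using r by auto
      ultimately show "d (2*r - 1) < d (2*r)" by simp
    qed
  qed
  have e2: "(\<forall>r. 1 \<le> r \<and> r < f \<longrightarrow> d (2*r - 1) < d (2*r + 1)) \<longleftrightarrow> (\<forall>a. odd a \<and> a + 2 < 2*f \<longrightarrow> d a < d (a+2))"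
  proof
    assume h: "\<forall>r. 1 \<le> r \<and> r < f \<longrightarrow> d (2*r - 1) < d (2*r + 1)"
    show "\<forall>a. odd a \<and> a + 2 < 2*f \<longrightarrow> d a < d (a+2)"
    proof (intro allI impI)
      fix a assume a: "odd a \<and> a + 2 < 2*f"
      then obtain r where r: "a = 2*r + 1" by (metis oddE)
      then have "1 \<le> Suc r \<and> Suc r < f" using a by auto
      then have "d (2*Suc r - 1) < d (2*Suc r + 1)" using h by blast
      moreover have "2*Suc r - 1 = a" "2 * Suc r + 1 = a + 2" using r by auto
      ultimately show "d a < d (a+2)" by simp
    qed
  next
    assume h: "\<forall>a. odd a \<and> a + 2 < 2*f \<longrightarrow> d a < d (a+2)"
    show "\<forall>r. 1 \<le> r \<and> r < f \<longrightarrow> d (2*r - 1) < d (2*r + 1)"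
    proof (intro allI impI)
      fix r assume r: "1 \<le> r \<and> r < f"
      then have "odd (2*r-1) \<and> 2*r - 1 + 2 < 2*f" by auto
      then have "d (2*r-1) < d (2*r-1+2)" using h by blast
      moreover have "2*r-1+2 = 2*r+1" using r by auto
      ultimately show "d (2*r - 1) < d (2*r + 1)" by simp
    qed
  qed
  show ?thesis unfolding Dnu_def Sym_def using e1 e2 by auto
qed

lemma head_odd:
  fixes d :: "nat \<Rightarrow> nat"
  assumes c1: "\<forall>a. odd a \<and> a < 2*f \<longrightarrow> d a < d (Suc a)"
    and c2: "\<forall>a. odd a \<and> a + 2 < 2*f \<longrightarrow> d a < d (a+2)"
    and a: "odd a"
  shows "a < b \<Longrightarrow> b \<le> 2*f \<Longrightarrow> d a < d b"
proof (induction b rule: less_induct)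
  case (less b)
  show ?case
  proof (cases "b \<le> a + 2")
    case True
    then consider "b = Suc a" | "b = a + 2" using less.prems by linarith
    then show ?thesis
    proof cases
      case 1 then show ?thesis using c1[rule_format, of a] a less.prems by simp
    next
      case 2
      have "a + 2 \<noteq> 2*f"
      proof
        assume "a + 2 = 2*f"
        then have "even (a+2)" by simp
        then show False using a by simp
      qed
      then have "a + 2 < 2*f" using less.prems 2 by linarith
      then show ?thesis using c2[rule_format, of a] a 2 by simp
    qed
  next
    case False
    show ?thesis
    proof (cases "odd b")
      case True
      have bb: "b = (b-2) + 2" using False by simp
      have "odd ((b-2)+2)" using True bb by simp
      then have o: "odd (b-2)" by simp
      have "b \<noteq> 2*f" using True by auto
      then have "odd (b-2)" "b - 2 + 2 < 2*f" using o bb less.prems by linarith+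
      moreover have "d a < d (b-2)" using less.IH[of "b-2"] False less.prems by simp
      moreover have "b - 2 + 2 = b" using False by simp
      ultimately have "d (b-2) < d b" using c2[rule_format, of "b-2"] by simp
      with \<open>d a < d (b-2)\<close> show ?thesis by (rule order.strict_trans)
    next
      case False2: False
      then have "odd (b-1)" "b - 1 < 2*f" using False less.prems a by auto
      moreover have "d a < d (b-1)" using less.IH[of "b-1"] False less.prems by simp
      moreover have "Suc (b - 1) = b" using False by simp
      ultimately have "d (b-1) < d b" using c1[rule_format, of "b-1"] by simp
      with \<open>d a < d (b-1)\<close> show ?thesis by (rule order.strict_trans)
    qed
  qed
qed

lemma tail_mono:
  fixes d :: "nat \<Rightarrow> nat"
  assumes c3: "\<forall>a. 2*f + 1 \<le> a \<and> a < n \<longrightarrow> d a < d (Suc a)"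
    and a: "2*f+1 \<le> a"
  shows "a < b \<Longrightarrow> b \<le> n \<Longrightarrow> d a < d b"
proof (induction b rule: less_induct)
  case (less b)
  show ?case
  proof (cases "b = Suc a")
    case True then show ?thesis using c3[rule_format, of a] a less.prems by simp
  next
    case False
    then have "d a < d (b-1)" using less.IH[of "b-1"] less.prems by simp
    moreover have "2*f+1 \<le> b - 1 \<and> b - 1 < n" using a less.prems False by linarith
    then have "d (b-1) < d (Suc (b-1))" using c3[rule_format, of "b-1"] by blast
    moreover have "Suc (b-1) = b" using less.prems by simp
    ultimately have "d (b-1) < d b" "d a < d (b-1)" by simp_all
    then show ?thesis by (rule order.strict_trans[rotated])
  qed
qed




lemma d0_cmp:
  assumes "1 \<le> a" "a < b" "b \<le> 2*f"
  shows "(even a \<longrightarrow> d0 f b < d0 f a) \<and> (odd a \<longrightarrow> d0 f a < d0 f b)"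
proof -
  have da: "d0 f a = (if odd a then (a+1) div 2 else 2*f + 1 - a div 2)" using assms unfolding d0_def by auto
  have db: "d0 f b = (if odd b then (b+1) div 2 else 2*f + 1 - b div 2)" using assms unfolding d0_def by auto
  show ?thesis
  proof (cases "even a")
    case True
    then obtain i where i: "a = 2*i" by blast
    show ?thesis
    proof (cases "even b")
      case True
      then obtain k where k: "b = 2*k" by blast
      show ?thesis using da db i k assms by auto
    next
      case False
      then obtain k where k: "b = 2*k+1" by (metis oddE)
      show ?thesis using da db i k assms by auto
    qed
  next
    case False
    then obtain i where i: "a = 2*i+1" by (metis oddE)
    show ?thesis
    proof (cases "even b")
      case True
      then obtain k where k: "b = 2*k" by blast
      show ?thesis using da db i k assms by auto
    next
      case False
      then obtain k where k: "b = 2*k+1" by (metis oddE)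
      show ?thesis using da db i k assms by auto
    qed
  qed
qed

lemma d0_range: "a \<in> {1..2*f} \<Longrightarrow> d0 f a \<in> {1..2*f}"
proof -
  assume a: "a \<in> {1..2*f}"
  show ?thesis
  proof (cases "even a")
    case True
    then obtain i where i: "a = 2*i" by blast
    then show ?thesis using a unfolding d0_def by auto
  next
    case False
    then obtain i where i: "a = 2*i+1" by (metis oddE)
    then show ?thesis using a unfolding d0_def by auto
  qed
qed

lemma d0_permutes: "d0 f permutes {1..2*f}"
proof -
  have inj: "inj_on (d0 f) {1..2*f}"
  proof (rule inj_onI)
    fix a b assume h: "a \<in> {1..2*f}" "b \<in> {1..2*f}" "d0 f a = d0 f b"
    show "a = b"
    proof (rule ccontr)
      assume "a \<noteq> b"
      then consider "a < b" | "b < a" by arith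
      then show False
      proof cases
        case 1 then show False using d0_cmp[of a b f] h by (cases "even a") auto
      next
        case 2 then show False using d0_cmp[of b a f] h by (cases "even b") auto
      qed
    qed
  qed
  have "d0 f ` {1..2*f} \<subseteq> {1..2*f}" using d0_range by blast
  then have "d0 f ` {1..2*f} = {1..2*f}" using endo_inj_surj[OF _ _ inj] by simp
  then have "bij_betw (d0 f) {1..2*f} {1..2*f}" using inj by (simp add: bij_betw_def)
  moreover have "\<And>x. x \<notin> {1..2*f} \<Longrightarrow> d0 f x = x" unfolding d0_def by auto
  ultimately show ?thesis by (rule bij_imp_permutes)
qed

lemma part1:
  assumes fn: "2*f \<le> n" and d: "d \<in> Df n f"
  shows "\<exists>w\<in>Sym n. d0 f = pmult d w \<and> clen n (d0 f) = clen n d + clen n w"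
proof -
  have sub: "{1..2*f} \<subseteq> {1..n}" using fn by auto
  have pd2: "d permutes {1..2*f}" using d unfolding Df_def Sym_def by auto
  have pd: "d permutes {1..n}" using permutes_subset[OF pd2 sub] .
  have p0: "d0 f permutes {1..n}" using permutes_subset[OF d0_permutes sub] .
  have dD: "d \<in> Dnu n f" using d unfolding Df_def by auto
  have c1: "\<forall>a. odd a \<and> a < 2*f \<longrightarrow> d a < d (Suc a)" and c2: "\<forall>a. odd a \<and> a + 2 < 2*f \<longrightarrow> d a < d (a+2)"
    using dD unfolding Dnu_alt by auto
  have "Inv n d \<subseteq> Inv n (d0 f)"
  proof
    fix z assume z: "z \<in> Inv n d"
    obtain a b where ab: "z = (a,b)" by (cases z)
    have h: "1 \<le> a" "a < b" "b \<le> n" "d b < d a" using z ab by (auto simp: Inv_def)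
    have b2: "b \<le> 2*f"
    proof (rule ccontr)
      assume nb: "\<not> b \<le> 2*f"
      then have "d b = b" using permutes_not_in[OF pd2] by auto
      moreover have "d a \<le> b"
      proof (cases "a \<le> 2*f")
        case True
        then have "d a \<in> {1..2*f}" using h pd2 by (metis atLeastAtMost_iff permutes_in_image)
        then show ?thesis using nb by auto
      next
        case False
        then have "d a = a" using permutes_not_in[OF pd2] by auto
        then show ?thesis using h by simp
      qed
      ultimately show False using h by simp
    qed
    have "even a"
    proof (rule ccontr)
      assume "odd a"
      then have "d a < d b" using head_odd[OF c1 c2] h b2 by blast
      then show False using h by simp
    qed
    then have "d0 f b < d0 f a" using d0_cmp[of a b f] h b2 by blast
    then show "z \<in> Inv n (d0 f)" using ab h by (auto simp: Inv_def)
  qed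
  then obtain w where w: "w permutes {1..n}" "d0 f = w \<circ> d" "card (Inv n (d0 f)) = card (Inv n d) + card (Inv n w)"
    using weak_order_G[OF pd p0] by blast
  show ?thesis
  proof (rule bexI[of _ w])
    show "w \<in> Sym n" using w(1) by (simp add: Sym_def)
    show "d0 f = pmult d w \<and> clen n (d0 f) = clen n d + clen n w"
      using w clen_eq[OF pd] clen_eq[OF p0] clen_eq[OF w(1)] by (simp add: pmult_def)
  qed
qed




lemma dJ_exists:
  assumes fn: "2*f \<le> n" and J: "J \<in> Pf n f"
  shows "\<exists>d. d \<in> Dnu n f \<and> (\<forall>a\<in>{1..2*f}. d a = J ! (a - 1))"
proof -
  have lJ: "length J = 2*f" and sJ: "sorted_wrt (<) J" and setJ: "set J \<subseteq> {1..n}" using J unfolding Pf_def by auto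
  have dJd: "distinct J" using sJ strict_sorted_iff by blast
  define S where "S = sorted_list_of_set ({1..n} - set J)"
  define L where "L = J @ S"
  have sS: "sorted_wrt (<) S" unfolding S_def by (rule strict_sorted_list_of_set)
  have setS: "set S = {1..n} - set J" unfolding S_def by simp
  have dS: "distinct S" unfolding S_def by simp
  have cJ: "card (set J) = 2*f" using dJd lJ distinct_card by metis
  have lS: "length S = n - 2*f"
  proof -
    have "length S = card ({1..n} - set J)" unfolding S_def by simp
    also have "\<dots> = n - 2*f" using card_Diff_subset[OF finite_set setJ] cJ by simp
    finally show ?thesis .
  qed
  have lL: "length L = n" unfolding L_def using lJ lS fn by simp
  have dL: "distinct L" unfolding L_def using dJd dS setS by auto
  have setL: "set L = {1..n}" unfolding L_def using setS setJ by auto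
  define d where "d x = (if x \<in> {1..n} then L ! (x - 1) else x)" for x
  have inj: "inj_on d {1..n}"
  proof (rule inj_onI)
    fix x y assume h: "x \<in> {1..n}" "y \<in> {1..n}" "d x = d y"
    then have "L ! (x-1) = L ! (y-1)" unfolding d_def by simp
    then have "x - 1 = y - 1" using nth_eq_iff_index_eq[OF dL, of "x-1" "y-1"] h lL by auto
    then show "x = y" using h by auto
  qed
  have img: "d ` {1..n} \<subseteq> {1..n}"
  proof
    fix y assume "y \<in> d ` {1..n}"
    then obtain x where x: "x \<in> {1..n}" "y = d x" by blast
    then have "y = L ! (x-1)" unfolding d_def by simp
    moreover have "x - 1 < length L" using x lL by auto
    ultimately show "y \<in> {1..n}" using nth_mem setL by blast
  qed
  have "d ` {1..n} = {1..n}" using endo_inj_surj[OF _ img inj] by simp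
  then have "bij_betw d {1..n} {1..n}" using inj by (simp add: bij_betw_def)
  moreover have "\<And>x. x \<notin> {1..n} \<Longrightarrow> d x = x" unfolding d_def by auto
  ultimately have pd: "d permutes {1..n}" by (rule bij_imp_permutes)
  have head: "\<And>a. a \<in> {1..2*f} \<Longrightarrow> d a = J ! (a-1)"
  proof -
    fix a assume a: "a \<in> {1..2*f}"
    then have "a \<in> {1..n}" "a - 1 < length J" using fn lJ by auto
    then show "d a = J ! (a-1)" unfolding d_def L_def by (simp add: nth_append)
  qed
  have tail: "\<And>a. 2*f+1 \<le> a \<Longrightarrow> a \<le> n \<Longrightarrow> d a = S ! (a - 1 - 2*f)"
  proof -
    fix a assume a: "2*f+1 \<le> a" "a \<le> n"
    then have "a \<in> {1..n}" "\<not> a - 1 < length J" using lJ by auto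
    then show "d a = S ! (a - 1 - 2*f)" unfolding d_def L_def using lJ by (simp add: nth_append)
  qed
  have c1: "\<forall>a. odd a \<and> a < 2*f \<longrightarrow> d a < d (Suc a)"
  proof (intro allI impI)
    fix a assume a: "odd a \<and> a < 2*f"
    then have "a \<ge> 1" by (cases a) auto
    then have "d a = J ! (a-1)" "d (Suc a) = J ! a" using head[of a] head[of "Suc a"] a by auto
    moreover have "J ! (a-1) < J ! a" using sorted_wrt_nth_less[OF sJ, of "a-1" a] a lJ \<open>a \<ge> 1\<close> by auto
    ultimately show "d a < d (Suc a)" by simp
  qed
  have c2: "\<forall>a. odd a \<and> a + 2 < 2*f \<longrightarrow> d a < d (a+2)"
  proof (intro allI impI)
    fix a assume a: "odd a \<and> a + 2 < 2*f"
    then have "a \<ge> 1" by (cases a) auto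
    then have "d a = J ! (a-1)" "d (a+2) = J ! (a+1)" using head[of a] head[of "a+2"] a by auto
    moreover have "J ! (a-1) < J ! (a+1)" using sorted_wrt_nth_less[OF sJ, of "a-1" "a+1"] a lJ \<open>a \<ge> 1\<close> by auto
    ultimately show "d a < d (a+2)" by simp
  qed
  have c3: "\<forall>a. 2*f + 1 \<le> a \<and> a < n \<longrightarrow> d a < d (Suc a)"
  proof (intro allI impI)
    fix a assume a: "2*f + 1 \<le> a \<and> a < n"
    then have "d a = S ! (a - 1 - 2*f)" "d (Suc a) = S ! (a - 2*f)" using tail[of a] tail[of "Suc a"] by auto
    moreover have "S ! (a - 1 - 2*f) < S ! (a - 2*f)" using sorted_wrt_nth_less[OF sS, of "a - 1 - 2*f" "a - 2*f"] a lS by auto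
    ultimately show "d a < d (Suc a)" by simp
  qed
  have "d \<in> Dnu n f" unfolding Dnu_alt using pd c1 c2 c3 by blast
  then show ?thesis using head by blast
qed

lemma Dnu_tail_unique:
  assumes fn: "2*f \<le> n" and d: "d \<in> Dnu n f" and d': "d' \<in> Dnu n f"
    and eq: "\<forall>a\<in>{1..2*f}. d a = d' a"
  shows "d = d'"
proof -
  have pd: "d permutes {1..n}" and pd': "d' permutes {1..n}" using d d' unfolding Dnu_alt by auto
  have c3: "\<forall>a. 2*f + 1 \<le> a \<and> a < n \<longrightarrow> d a < d (Suc a)" using d unfolding Dnu_alt by auto
  have c3': "\<forall>a. 2*f + 1 \<le> a \<and> a < n \<longrightarrow> d' a < d' (Suc a)" using d' unfolding Dnu_alt by auto
  define T where "T = [2*f+1..<n+1]"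
  have sT: "sorted_wrt (<) (map d T)" unfolding sorted_wrt_map T_def
    by (rule sorted_wrt_mono_rel[OF _ sorted_wrt_upt]) (auto intro: tail_mono[OF c3])
  have sT': "sorted_wrt (<) (map d' T)" unfolding sorted_wrt_map T_def
    by (rule sorted_wrt_mono_rel[OF _ sorted_wrt_upt]) (auto intro: tail_mono[OF c3'])
  have split: "{2*f+1..n} = {1..n} - {1..2*f}" by auto
  have "set (map d T) = d ` {2*f+1..n}" unfolding T_def by auto
  also have "\<dots> = d ` {1..n} - d ` {1..2*f}" unfolding split
    by (rule inj_on_image_set_diff[OF permutes_inj[OF pd, THEN inj_on_subset]]) (use fn in auto)
  also have "\<dots> = {1..n} - d' ` {1..2*f}" using permutes_image[OF pd] eq by auto
  also have "\<dots> = d' ` {1..n} - d' ` {1..2*f}" using permutes_image[OF pd'] by auto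
  also have "\<dots> = d' ` {2*f+1..n}" unfolding split
    by (rule inj_on_image_set_diff[OF permutes_inj[OF pd', THEN inj_on_subset], symmetric]) (use fn in auto)
  also have "\<dots> = set (map d' T)" unfolding T_def by auto
  finally have "map d' T = map d T" using strict_sorted_equal[OF sT sT'] by simp
  then have tl: "\<forall>x\<in>{2*f+1..n}. d x = d' x" unfolding T_def by auto
  show ?thesis
  proof
    fix x show "d x = d' x"
    proof (cases "x \<in> {1..n}")
      case True
      then show ?thesis using eq tl by (cases "x \<le> 2*f") auto
    next
      case False
      then show ?thesis using permutes_not_in[OF pd] permutes_not_in[OF pd'] by simp
    qed
  qed
qed

lemma dJ_props:
  assumes fn: "2*f \<le> n" and J: "J \<in> Pf n f"
  shows "dJ n f J \<in> Dnu n f \<and> (\<forall>a\<in>{1..2*f}. dJ n f J a = J ! (a - 1))"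
proof -
  have "\<exists>!d. d \<in> Dnu n f \<and> (\<forall>a\<in>{1..2*f}. d a = J ! (a - 1))"
  proof (rule ex_ex1I)
    show "\<exists>d. d \<in> Dnu n f \<and> (\<forall>a\<in>{1..2*f}. d a = J ! (a - 1))" by (rule dJ_exists[OF fn J])
  next
    fix d d' assume "d \<in> Dnu n f \<and> (\<forall>a\<in>{1..2*f}. d a = J ! (a - 1))"
      "d' \<in> Dnu n f \<and> (\<forall>a\<in>{1..2*f}. d' a = J ! (a - 1))"
    then show "d = d'" using Dnu_tail_unique[OF fn] by auto
  qed
  then show ?thesis unfolding dJ_def by (rule theI')
qed




lemma J0_Pf: "2*f \<le> n \<Longrightarrow> J0 n f \<in> Pf n f"
  unfolding J0_def Pf_def by (auto simp del: upt_Suc)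

lemma J0_nth: "2*f \<le> n \<Longrightarrow> a \<in> {1..2*f} \<Longrightarrow> J0 n f ! (a-1) = n - 2*f + a"
  unfolding J0_def by (subst nth_upt) (auto simp del: upt_Suc)

lemma notinv_lt: "\<sigma> permutes {1..n} \<Longrightarrow> 1 \<le> x \<Longrightarrow> x < y \<Longrightarrow> y \<le> n \<Longrightarrow> (x,y) \<notin> Inv n \<sigma> \<Longrightarrow> \<sigma> x < \<sigma> y"
proof -
  assume h: "\<sigma> permutes {1..n}" "1 \<le> x" "x < y" "y \<le> n" "(x,y) \<notin> Inv n \<sigma>"
  then have "\<not> \<sigma> y < \<sigma> x" by (auto simp: Inv_def)
  moreover have "\<sigma> x \<noteq> \<sigma> y" using permutes_inj[OF h(1)] h(3) by (metis injD less_irrefl)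
  ultimately show ?thesis by simp
qed

lemma v_facts:
  assumes fn: "2*f \<le> n"
  shows "dJ n f (J0 n f) \<in> Dnu n f"
    "\<And>a. a \<in> {1..2*f} \<Longrightarrow> dJ n f (J0 n f) a = n - 2*f + a"
    "\<And>b. 2*f < b \<Longrightarrow> b \<le> n \<Longrightarrow> dJ n f (J0 n f) b \<le> n - 2*f"
proof -
  let ?v = "dJ n f (J0 n f)"
  have P: "?v \<in> Dnu n f \<and> (\<forall>a\<in>{1..2*f}. ?v a = J0 n f ! (a - 1))" using dJ_props[OF fn J0_Pf[OF fn]] .
  then show vD: "?v \<in> Dnu n f" by blast
  show hd: "\<And>a. a \<in> {1..2*f} \<Longrightarrow> ?v a = n - 2*f + a" using P J0_nth[OF fn] by auto
  fix b assume b: "2*f < b" "b \<le> n"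
  have pv: "?v permutes {1..n}" using vD unfolding Dnu_alt by blast
  have "?v b \<in> {1..n}" using b permutes_in_image[OF pv] by auto
  show "?v b \<le> n - 2*f"
  proof (rule ccontr)
    assume "\<not> ?v b \<le> n - 2*f"
    then have c: "?v b - (n - 2*f) \<in> {1..2*f}" using \<open>?v b \<in> {1..n}\<close> fn by auto
    then have "?v (?v b - (n - 2*f)) = ?v b" using hd \<open>\<not> ?v b \<le> n - 2*f\<close> by auto
    then have "?v b - (n - 2*f) = b" using permutes_inj[OF pv] by (metis injD)
    then show False using c b by auto
  qed
qed

lemma part2:
  assumes fn: "2*f \<le> n" and J: "J \<in> Pf n f"
  shows "\<exists>w'\<in>Sym n. dJ n f (J0 n f) = pmult (dJ n f J) w'
              \<and> clen n (dJ n f (J0 n f)) = clen n (dJ n f J) + clen n w'"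
proof -
  let ?v = "dJ n f (J0 n f)" and ?u = "dJ n f J"
  have uP: "?u \<in> Dnu n f" "\<forall>a\<in>{1..2*f}. ?u a = J ! (a - 1)" using dJ_props[OF fn J] by auto
  have pu: "?u permutes {1..n}" using uP unfolding Dnu_alt by blast
  have pv: "?v permutes {1..n}" using v_facts(1)[OF fn] unfolding Dnu_alt by blast
  have c3: "\<forall>a. 2*f + 1 \<le> a \<and> a < n \<longrightarrow> ?u a < ?u (Suc a)" using uP unfolding Dnu_alt by blast
  have lJ: "length J = 2*f" and sJ: "sorted_wrt (<) J" using J unfolding Pf_def by auto
  have "Inv n ?u \<subseteq> Inv n ?v"
  proof
    fix z assume z: "z \<in> Inv n ?u"
    obtain a b where ab: "z = (a,b)" by (cases z)
    have h: "1 \<le> a" "a < b" "b \<le> n" "?u b < ?u a" using z ab by (auto simp: Inv_def)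
    have b2: "2*f < b"
    proof (rule ccontr)
      assume "\<not> 2*f < b"
      then have "?u a = J ! (a-1)" "?u b = J ! (b-1)" using uP(2) h by auto
      moreover have "J ! (a-1) < J ! (b-1)" using sorted_wrt_nth_less[OF sJ, of "a-1" "b-1"] h lJ \<open>\<not> 2*f < b\<close> by auto
      ultimately show False using h by simp
    qed
    have a2: "a \<le> 2*f"
    proof (rule ccontr)
      assume "\<not> a \<le> 2*f"
      then have "?u a < ?u b" using tail_mono[OF c3, of a b] h by simp
      then show False using h by simp
    qed
    have "?v b < ?v a" using v_facts(2)[OF fn, of a] v_facts(3)[OF fn, of b] b2 h a2 by auto
    then show "z \<in> Inv n ?v" using ab h by (auto simp: Inv_def)
  qed
  then obtain w where w: "w permutes {1..n}" "?v = w \<circ> ?u" "card (Inv n ?v) = card (Inv n ?u) + card (Inv n w)"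
    using weak_order_G[OF pu pv] by blast
  show ?thesis
  proof (rule bexI[of _ w])
    show "w \<in> Sym n" using w(1) by (simp add: Sym_def)
    show "?v = pmult ?u w \<and> clen n ?v = clen n ?u + clen n w"
      using w clen_eq[OF pu] clen_eq[OF pv] clen_eq[OF w(1)] by (simp add: pmult_def)
  qed
qed

lemma part3:
  assumes fn: "2*f \<le> n" and d: "d \<in> Dnu n f" and ne: "d \<noteq> pmult (d0 f) (dJ n f (J0 n f))"
  shows "\<exists>j. 1 \<le> j \<and> j \<le> n - 1 \<and> pmult d (sj j) \<in> Dnu n f
                   \<and> clen n (pmult d (sj j)) = clen n d + 1"
proof -
  let ?v = "dJ n f (J0 n f)"
  define m where "m = ?v \<circ> d0 f"
  have mdef: "pmult (d0 f) ?v = m" unfolding m_def pmult_def by simp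
  have sub: "{1..2*f} \<subseteq> {1..n}" using fn by auto
  have p0: "d0 f permutes {1..n}" using permutes_subset[OF d0_permutes sub] .
  have vD: "?v \<in> Dnu n f" using v_facts(1)[OF fn] .
  have pv: "?v permutes {1..n}" using vD unfolding Dnu_alt by blast
  have vc3: "\<forall>a. 2*f + 1 \<le> a \<and> a < n \<longrightarrow> ?v a < ?v (Suc a)" using vD unfolding Dnu_alt by blast
  have pm: "m permutes {1..n}" unfolding m_def using p0 pv by (rule permutes_compose)
  have mhead: "\<And>x. x \<in> {1..2*f} \<Longrightarrow> m x = n - 2*f + d0 f x"
    unfolding m_def using v_facts(2)[OF fn] d0_range by auto
  have d0out: "\<And>x. x \<notin> {1..2*f} \<Longrightarrow> d0 f x = x" unfolding d0_def by auto
  have mtail: "\<And>x. 2*f < x \<Longrightarrow> m x = ?v x" unfolding m_def using d0out by auto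
  have mD: "m \<in> Dnu n f"
    unfolding Dnu_alt
  proof (intro conjI allI impI)
    show "m permutes {1..n}" by (rule pm)
  next
    fix a assume a: "odd a \<and> a < 2*f"
    then have "1 \<le> a" by (cases a) auto
    then have "d0 f a < d0 f (Suc a)" using d0_cmp[of a "Suc a" f] a by auto
    then show "m a < m (Suc a)" using mhead[of a] mhead[of "Suc a"] a \<open>1 \<le> a\<close> by auto
  next
    fix a assume a: "odd a \<and> a + 2 < 2*f"
    then have "1 \<le> a" by (cases a) auto
    then have "d0 f a < d0 f (a+2)" using d0_cmp[of a "a+2" f] a by auto
    then show "m a < m (a+2)" using mhead[of a] mhead[of "a+2"] a \<open>1 \<le> a\<close> by auto
  next
    fix a assume a: "2*f + 1 \<le> a \<and> a < n"
    then show "m a < m (Suc a)" using mtail[of a] mtail[of "Suc a"] vc3 by auto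
  qed
  have pd: "d permutes {1..n}" using d unfolding Dnu_alt by blast
  have c1: "\<forall>a. odd a \<and> a < 2*f \<longrightarrow> d a < d (Suc a)" and c2: "\<forall>a. odd a \<and> a + 2 < 2*f \<longrightarrow> d a < d (a+2)"
    and c3: "\<forall>a. 2*f + 1 \<le> a \<and> a < n \<longrightarrow> d a < d (Suc a)"
    using d unfolding Dnu_alt by auto
  have subI: "Inv n d \<subseteq> Inv n m"
  proof
    fix z assume z: "z \<in> Inv n d"
    obtain a b where ab: "z = (a,b)" by (cases z)
    have h: "1 \<le> a" "a < b" "b \<le> n" "d b < d a" using z ab by (auto simp: Inv_def)
    have a2: "a \<le> 2*f"
    proof (rule ccontr)
      assume "\<not> a \<le> 2*f"
      then have "d a < d b" using tail_mono[OF c3, of a b] h by simp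
      then show False using h by simp
    qed
    have "m b < m a"
    proof (cases "b \<le> 2*f")
      case True
      have "even a"
      proof (rule ccontr)
        assume "odd a"
        then have "d a < d b" using head_odd[OF c1 c2] h True by blast
        then show False using h by simp
      qed
      then have "d0 f b < d0 f a" using d0_cmp[of a b f] h True by blast
      then show ?thesis using mhead[of a] mhead[of b] h True a2 by auto
    next
      case False
      then have "m b \<le> n - 2*f" using mtail[of b] v_facts(3)[OF fn, of b] h by auto
      moreover have "m a > n - 2*f" using mhead[of a] h a2 d0_range[of a f] by auto
      ultimately show ?thesis by simp
    qed
    then show "z \<in> Inv n m" using ab h by (auto simp: Inv_def)
  qed
  have neI: "Inv n d \<noteq> Inv n m"
  proof
    assume "Inv n d = Inv n m"
    then have "d = m" using Inv_eq_imp_eq[OF pd pm] by blast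
    then show False using ne mdef by simp
  qed
  obtain a b where ab: "(a,b) \<in> Inv n m" "(a,b) \<notin> Inv n d" "d b = Suc (d a)"
    using step_lemma[OF pd pm subI neI] by blast
  have abr: "1 \<le> a" "a < b" "b \<le> n" using ab(1) by (auto simp: Inv_def)
  define j where "j = d a"
  have jr: "1 \<le> j" "j < n"
  proof -
    have "d a \<in> {1..n}" "d b \<in> {1..n}" using perm_facts(2)[OF pd] abr by auto
    then show "1 \<le> j" "j < n" using ab(3) unfolding j_def by auto
  qed
  have li: "Inv n (sj j \<circ> d) = insert (a,b) (Inv n d)"
    using lmul_Inv(1)[OF pd abr] ab(3) unfolding j_def by simp
  have pd': "sj j \<circ> d permutes {1..n}" using pd sj_permutes[OF jr] by (rule permutes_compose)
  have sub': "Inv n (sj j \<circ> d) \<subseteq> Inv n m" using li subI ab(1) by auto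
  have mc1: "\<forall>a. odd a \<and> a < 2*f \<longrightarrow> m a < m (Suc a)" and mc2: "\<forall>a. odd a \<and> a + 2 < 2*f \<longrightarrow> m a < m (a+2)"
    and mc3: "\<forall>a. 2*f + 1 \<le> a \<and> a < n \<longrightarrow> m a < m (Suc a)"
    using mD unfolding Dnu_alt by auto
  have keep: "\<And>x y. 1 \<le> x \<Longrightarrow> x < y \<Longrightarrow> y \<le> n \<Longrightarrow> m x < m y \<Longrightarrow> (sj j \<circ> d) x < (sj j \<circ> d) y"
  proof -
    fix x y assume h: "1 \<le> x" "x < y" "y \<le> n" "m x < m y"
    then have "(x,y) \<notin> Inv n m" by (auto simp: Inv_def)
    then have "(x,y) \<notin> Inv n (sj j \<circ> d)" using sub' by blast
    then show "(sj j \<circ> d) x < (sj j \<circ> d) y" using notinv_lt[OF pd' h(1-3)] by blast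
  qed
  have nD: "sj j \<circ> d \<in> Dnu n f"
    unfolding Dnu_alt
  proof (intro conjI allI impI)
    show "sj j \<circ> d permutes {1..n}" by (rule pd')
  next
    fix x assume x: "odd x \<and> x < 2*f"
    then have "1 \<le> x" by (cases x) auto
    then show "(sj j \<circ> d) x < (sj j \<circ> d) (Suc x)" using keep[of x "Suc x"] mc1 x fn by auto
  next
    fix x assume x: "odd x \<and> x + 2 < 2*f"
    then have "1 \<le> x" by (cases x) auto
    then show "(sj j \<circ> d) x < (sj j \<circ> d) (x+2)" using keep[of x "x+2"] mc2 x fn by auto
  next
    fix x assume x: "2*f + 1 \<le> x \<and> x < n"
    then show "(sj j \<circ> d) x < (sj j \<circ> d) (Suc x)" using keep[of x "Suc x"] mc3 by auto
  qed
  have "card (Inv n (sj j \<circ> d)) = card (Inv n d) + 1" using li ab(2) by simp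
  then have "clen n (sj j \<circ> d) = clen n d + 1" using clen_eq[OF pd] clen_eq[OF pd'] by simp
  then show ?thesis using nD jr unfolding pmult_def by (intro exI[of _ j]) auto
qed

theorem lemma5p11:
  fixes n f :: nat
  assumes "1 \<le> f" and "f \<le> n div 2"
  shows "(\<forall>d\<in>Df n f. \<exists>w\<in>Sym n. d0 f = pmult d w \<and> clen n (d0 f) = clen n d + clen n w)
       \<and> (\<forall>J\<in>Pf n f. \<exists>w'\<in>Sym n. dJ n f (J0 n f) = pmult (dJ n f J) w'
              \<and> clen n (dJ n f (J0 n f)) = clen n (dJ n f J) + clen n w')
       \<and> (\<forall>d\<in>Dnu n f. d \<noteq> pmult (d0 f) (dJ n f (J0 n f)) \<longrightarrow>
              (\<exists>j. 1 \<le> j \<and> j \<le> n - 1 \<and> pmult d (sj j) \<in> Dnu n f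
                   \<and> clen n (pmult d (sj j)) = clen n d + 1))"
proof -
  have fn: "2*f \<le> n" using assms(2) by linarith
  show ?thesis using part1[OF fn] part2[OF fn] part3[OF fn] by blast
qed


end
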